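(* Let $(\Omega,\mathcal{A},\mathbb{P})$ be a probability space and $k\colon\Omega\times\mathbb{R}\times\mathbb{R}\to\mathbb{R}$ jointly measurable, with mean kernel $K(s,t)=\mathbb{E}_\omega[k(\omega,s,t)]$ continuous and positive definite. Let $X\subset\mathbb{R}^d$ be compact. Assume: (i) almost surely, $k(\omega,s,t)$ is $L_k$-Lipschitz in $s$, uniformly in $t$; (ii) $\rho$ is a Borel probability measure on $Z=\mathbb{R}^d\times\mathbb{R}\times\mathbb{R}$ supported on $S=\{(a,b,t)\in Z:\|a\|_2\le1,\ |b|\le1,\ |t|\le1\}$; (iii) $|k(\omega,s,t)|\le1$ almost surely. Let $c\in C(S)$, $f(x)=\int_S c(a,b,t)K(\langle a,x\rangle+b,t)\,d\rho(a,b,t)$, and $C=\|c\|_{L^\infty(S)}$. Draw $z_i=(a_i,b_i,t_i)$ i.i.d. with law $\rho$ and $\omega_i$ i.i.d. with law $\mathbb{P}$, independently, $i=1,\dots,N$, and set $$F_N(x)=\frac1N\sum_{i=1}^N c(z_i)\,k(\omega_i,\langle a_i,x\rangle+b_i,t_i).$$ Then for any $\delta\in(0,1)$ and $\epsilon>0$, with probability at least $1-\delta$ over the joint draw of $\{z_i,\omega_i\}_{i=1}^N$, $$\sup_{x\in X}|F_N(x)-f(x)|\le C\sqrt{\frac{2\log(2\mathcal{N}(\epsilon,X))+2\log(1/\delta)}{N}}+2CL_k\epsilon,$$ where $\mathcal{N}(\epsilon,X)$ is the $\epsilon$-covering number of $X$ in the Euclidean metric. *)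

theory Defs
  imports "HOL-Probability.Probability"
begin

definition mean_kernel :: "'w measure \<Rightarrow> ('w \<Rightarrow> real \<Rightarrow> real \<Rightarrow> real) \<Rightarrow> real \<Rightarrow> real \<Rightarrow> real" where
  "mean_kernel M k s t = (\<integral>\<omega>. k \<omega> s t \<partial>M)"

definition pd_kernel :: "(real \<Rightarrow> real \<Rightarrow> real) \<Rightarrow> bool" where
  "pd_kernel K \<longleftrightarrow> (\<forall>s t. K s t = K t s) \<and>
     (\<forall>(n::nat) (x::nat \<Rightarrow> real) (a::nat \<Rightarrow> real).
        0 \<le> (\<Sum>i<n. \<Sum>j<n. a i * a j * K (x i) (x j)))"

definition covering_number :: "real \<Rightarrow> 'a::metric_space set \<Rightarrow> nat" where
  "covering_number \<epsilon> X = Inf {card D | D. finite D \<and> X \<subseteq> (\<Union>y\<in>D. cball y \<epsilon>)}"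

end

theory Submission
  imports Defs
begin

lemma indep_components:
  assumes Q: "prob_space Q" and False: "I \<noteq> {}"
  shows "prob_space.indep_vars (PiM I (\<lambda>_. Q)) (\<lambda>_. Q) (\<lambda>i \<xi>. \<xi> i) I"
proof -
  interpret P: prob_space "PiM I (\<lambda>_. Q)" using Q by (intro prob_space_PiM) auto
  have d: "distr (PiM I (\<lambda>_. Q)) Q (\<lambda>\<xi>. \<xi> i) = Q" if "i \<in> I" for i
    using that Q by (intro distr_PiM_component) auto
  have "distr (PiM I (\<lambda>_. Q)) (PiM I (\<lambda>_. Q)) (\<lambda>x. \<lambda>i\<in>I. x i) = distr (PiM I (\<lambda>_. Q)) (PiM I (\<lambda>_. Q)) (\<lambda>x. x)"
    by (intro distr_cong) (auto simp: space_PiM PiE_def extensional_def)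
  also have "\<dots> = PiM I (\<lambda>_. Q)" by simp
  finally have e: "distr (PiM I (\<lambda>_. Q)) (PiM I (\<lambda>_. Q)) (\<lambda>x. \<lambda>i\<in>I. x i) = PiM I (\<lambda>_. Q)" .
  show ?thesis
    apply (subst P.indep_vars_iff_distr_eq_PiM'[OF False])
     apply simp
    apply (subst e)
    apply (rule PiM_cong)
    using d by auto
qed

lemma hoeffding_iid:
  fixes Q :: "'q measure" and g :: "'q \<Rightarrow> real" and N :: nat and \<tau> C :: real
  assumes Q: "prob_space Q" and g[measurable]: "g \<in> borel_measurable Q"
    and bd: "AE q in Q. \<bar>g q\<bar> \<le> C" and C: "C > 0" and N: "N > 0" and \<tau>: "\<tau> \<ge> 0"
  shows "measure (PiM {..<N} (\<lambda>_. Q)) {\<xi>\<in>space (PiM {..<N} (\<lambda>_. Q)).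
           \<bar>(\<Sum>i<N. g (\<xi> i)) / N - (\<integral>q. g q \<partial>Q)\<bar> \<ge> \<tau>} \<le> 2 * exp (-2 * N * \<tau>\<^sup>2 / (2*C)\<^sup>2)"
proof -
  let ?P = "PiM {..<N} (\<lambda>_. Q)"
  interpret P: prob_space ?P using Q by (intro prob_space_PiM) auto
  have d: "distr ?P Q (\<lambda>\<xi>. \<xi> i) = Q" if "i < N" for i
    using that Q by (intro distr_PiM_component) auto
  have dX: "distr ?P borel (\<lambda>\<xi>. g (\<xi> i)) = distr Q borel g" if "i < N" for i
  proof -
    have "distr ?P borel (\<lambda>\<xi>. g (\<xi> i)) = distr (distr ?P Q (\<lambda>\<xi>. \<xi> i)) borel g"
      using that by (subst distr_distr) (auto simp: comp_def)
    then show ?thesis using d[OF that] by simp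
  qed
  have ex: "P.expectation (\<lambda>\<xi>. g (\<xi> 0)) = (\<integral>q. g q \<partial>Q)"
  proof -
    have "(\<integral>q. g q \<partial>Q) = (\<integral>q. g q \<partial>(distr ?P Q (\<lambda>\<xi>. \<xi> 0)))" using d N by simp
    also have "\<dots> = P.expectation (\<lambda>\<xi>. g (\<xi> 0))" using N by (subst integral_distr) auto
    finally show ?thesis by simp
  qed
  interpret H: Hoeffding_ineq_iid ?P "{..<N}" "\<lambda>i \<xi>. g (\<xi> i)" "\<lambda>\<xi>. g (\<xi> 0)" "-C" C "\<integral>q. g q \<partial>Q"
  proof unfold_locales
    show "P.indep_vars (\<lambda>_. borel) (\<lambda>i \<xi>. g (\<xi> i)) {..<N}"
      using N P.indep_vars_compose2[OF indep_components[OF Q, of "{..<N}"], of "\<lambda>_. g" "\<lambda>_. borel"]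
      by auto
    show "distr ?P borel (\<lambda>\<xi>. g (\<xi> i)) = distr ?P borel (\<lambda>\<xi>. g (\<xi> 0))" if "i \<in> {..<N}" for i
      using dX that N by auto
    have "AE q in Q. g q \<in> {-C..C}" using bd by (auto simp: abs_le_iff elim!: AE_mp)
    then show "AE \<xi> in ?P. g (\<xi> 0) \<in> {-C..C}"
      using AE_PiM_component[of "{..<N}" "\<lambda>_. Q" 0 "\<lambda>q. g q \<in> {-C..C}"] Q N
      by auto
    show "(\<integral>q. g q \<partial>Q) \<equiv> P.expectation (\<lambda>\<xi>. g (\<xi> 0))" using ex by simp
    show "finite {..<N}" by simp
    show "P.random_variable borel (\<lambda>\<xi>. g (\<xi> 0))"
      using N by (intro measurable_compose[OF _ g]) (auto intro: measurable_component_singleton)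
  qed
  show ?thesis
    using H.Hoeffding_ineq_abs_ge'[OF \<tau>] C N by (simp add: lessThan_empty_iff)
qed


lemma lip_step:
  fixes a x y :: "'a::euclidean_space"
  assumes cb: "\<bar>cz\<bar> \<le> C" and kl: "\<And>s s'. \<bar>kk s - kk s'\<bar> \<le> L * \<bar>s - s'\<bar>"
    and L: "L \<ge> 0" and a: "norm a \<le> 1" and d: "dist y x \<le> \<epsilon>"
  shows "\<bar>cz * kk (inner a x + b) - cz * kk (inner a y + b)\<bar> \<le> C * L * \<epsilon>"
proof -
  have "\<bar>inner a x - inner a y\<bar> = \<bar>inner a (x - y)\<bar>" by (simp add: inner_diff_right)
  also have "\<dots> \<le> norm a * norm (x - y)" by (rule Cauchy_Schwarz_ineq2)
  also have "\<dots> \<le> 1 * \<epsilon>" using a d by (intro mult_mono) (auto simp: dist_norm norm_minus_commute)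
  finally have ip: "\<bar>(inner a x + b) - (inner a y + b)\<bar> \<le> \<epsilon>" by simp
  have "\<bar>cz * kk (inner a x + b) - cz * kk (inner a y + b)\<bar> = \<bar>cz\<bar> * \<bar>kk (inner a x + b) - kk (inner a y + b)\<bar>"
    by (simp add: abs_mult[symmetric] right_diff_distrib)
  also have "\<dots> \<le> C * (L * \<epsilon>)"
  proof (rule mult_mono)
    show "\<bar>kk (inner a x + b) - kk (inner a y + b)\<bar> \<le> L * \<epsilon>"
      using kl[of "inner a x + b" "inner a y + b"] mult_left_mono[OF ip L] by linarith
  qed (use cb L in auto)
  finally show ?thesis by simp
qed

theorem theorem11:
  fixes M :: "'w measure"
    and k :: "'w \<Rightarrow> real \<Rightarrow> real \<Rightarrow> real"
    and X :: "'a::euclidean_space set"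
    and \<rho> :: "('a \<times> real \<times> real) measure"
    and c :: "'a \<times> real \<times> real \<Rightarrow> real"
    and L\<^sub>k \<delta> \<epsilon> :: real
    and N :: nat
  assumes M: "prob_space M"
    and k_meas: "(\<lambda>(\<omega>, s, t). k \<omega> s t) \<in> borel_measurable (M \<Otimes>\<^sub>M (borel \<Otimes>\<^sub>M borel))"
    and K_cont: "continuous_on UNIV (\<lambda>(s, t). mean_kernel M k s t)"
    and K_pd: "pd_kernel (mean_kernel M k)"
    and X: "compact X"
    and Lip: "AE \<omega> in M. \<forall>s s' t. \<bar>k \<omega> s t - k \<omega> s' t\<bar> \<le> L\<^sub>k * \<bar>s - s'\<bar>"
    and \<rho>: "prob_space \<rho>" "sets \<rho> = sets borel"
    and \<rho>_supp: "AE z in \<rho>. z \<in> {(a, b, t). norm a \<le> 1 \<and> \<bar>b\<bar> \<le> 1 \<and> \<bar>t\<bar> \<le> 1}"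
    and k_bdd: "AE \<omega> in M. \<forall>s t. \<bar>k \<omega> s t\<bar> \<le> 1"
    and c_cont: "continuous_on {(a, b, t). norm a \<le> 1 \<and> \<bar>b\<bar> \<le> 1 \<and> \<bar>t\<bar> \<le> 1} c"
    and N: "N > 0"
    and \<delta>: "0 < \<delta>" "\<delta> < 1"
    and \<epsilon>: "0 < \<epsilon>"
  shows
    "let S = {(a, b, t). norm a \<le> 1 \<and> \<bar>b\<bar> \<le> 1 \<and> \<bar>t\<bar> \<le> 1};
         K = mean_kernel M k;
         C = (SUP z\<in>S. \<bar>c z\<bar>);
         f = (\<lambda>x. set_lebesgue_integral \<rho> S
                (\<lambda>(a, b, t). c (a, b, t) * K (inner a x + b) t));
         F = (\<lambda>(\<xi> :: nat \<Rightarrow> ('a \<times> real \<times> real) \<times> 'w) x.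
                (1 / real N) * (\<Sum>i<N. (case \<xi> i of ((a, b, t), \<omega>) \<Rightarrow>
                    c (a, b, t) * k \<omega> (inner a x + b) t)));
         P = PiM {..<N} (\<lambda>_. \<rho> \<Otimes>\<^sub>M M);
         bound = C * sqrt ((2 * ln (2 * real (covering_number \<epsilon> X)) + 2 * ln (1 / \<delta>)) / real N)
                 + 2 * C * L\<^sub>k * \<epsilon>
     in \<exists>E\<in>sets P. measure P E \<ge> 1 - \<delta> \<and>
          E \<subseteq> {\<xi>\<in>space P. \<forall>x\<in>X. \<bar>F \<xi> x - f x\<bar> \<le> bound}"
  proof -
  interpret Mp: prob_space M by (rule M)
  interpret R: prob_space \<rho> by (rule \<rho>(1))
  interpret Q: pair_prob_space \<rho> M by unfold_locales
  have Qp: "prob_space (\<rho> \<Otimes>\<^sub>M M)" by (rule prob_space_pair[OF \<rho>(1) M])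
  define S :: "('a \<times> real \<times> real) set" where "S = {(a, b, t). norm a \<le> 1 \<and> \<bar>b\<bar> \<le> 1 \<and> \<bar>t\<bar> \<le> 1}"
  define K where "K = mean_kernel M k"
  define C where "C = (SUP z\<in>S. \<bar>c z\<bar>)"
  define f where "f = (\<lambda>x. set_lebesgue_integral \<rho> S (\<lambda>(a, b, t). c (a, b, t) * K (inner a x + b) t))"
  define F where "F = (\<lambda>(\<xi> :: nat \<Rightarrow> ('a \<times> real \<times> real) \<times> 'w) x.
                (1 / real N) * (\<Sum>i<N. (case \<xi> i of ((a, b, t), \<omega>) \<Rightarrow>
                    c (a, b, t) * k \<omega> (inner a x + b) t)))"
  define P where "P = PiM {..<N} (\<lambda>_. \<rho> \<Otimes>\<^sub>M M)"
  define \<tau> where "\<tau> = C * sqrt ((2 * ln (2 * real (covering_number \<epsilon> X)) + 2 * ln (1 / \<delta>)) / real N)"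
  define bound where "bound = \<tau> + 2 * C * L\<^sub>k * \<epsilon>"
  interpret P: prob_space P unfolding P_def by (intro prob_space_PiM Qp)
  have S_eq: "S = cball 0 1 \<times> cball 0 1 \<times> cball 0 1" by (auto simp: S_def)
  have S_compact: "compact S" unfolding S_eq by (intro compact_Times compact_cball)
  have S_borel: "S \<in> sets borel" using compact_imp_closed[OF S_compact] by simp
  have S_sets: "S \<in> sets \<rho>" using S_borel \<rho>(2) by simp
  have S_ne: "(0,0,0) \<in> S" by (simp add: S_def)
  have cS: "continuous_on S c" using c_cont by (simp add: S_def)
  have bdd: "bdd_above ((\<lambda>z. \<bar>c z\<bar>) ` S)"
  proof -
    have "compact ((\<lambda>z. \<bar>c z\<bar>) ` S)"
      by (intro compact_continuous_image continuous_intros S_compact cS)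
    then show ?thesis by (intro bounded_imp_bdd_above compact_imp_bounded)
  qed
  have cC: "\<And>z. z \<in> S \<Longrightarrow> \<bar>c z\<bar> \<le> C" unfolding C_def using bdd by (intro cSUP_upper)
  have C0: "0 \<le> C" using cC[OF S_ne] by linarith

  obtain Nn where Nn: "{\<omega>\<in>space M. \<not> ((\<forall>s s' t. \<bar>k \<omega> s t - k \<omega> s' t\<bar> \<le> L\<^sub>k * \<bar>s - s'\<bar>) \<and> (\<forall>s t. \<bar>k \<omega> s t\<bar> \<le> 1))} \<subseteq> Nn"
      "emeasure M Nn = 0" "Nn \<in> sets M"
    using AE_E[OF AE_conjI[OF Lip k_bdd]] by blast
  define G where "G = space M - Nn"
  have G_sets: "G \<in> sets M" unfolding G_def using Nn(3) by auto
  have G_lip: "\<And>\<omega> s s' t. \<omega> \<in> G \<Longrightarrow> \<bar>k \<omega> s t - k \<omega> s' t\<bar> \<le> L\<^sub>k * \<bar>s - s'\<bar>"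
    using Nn(1) unfolding G_def by blast
  have G_bd: "\<And>\<omega> s t. \<omega> \<in> G \<Longrightarrow> \<bar>k \<omega> s t\<bar> \<le> 1"
    using Nn(1) unfolding G_def by blast
  have G_AE: "AE \<omega> in M. \<omega> \<in> G"
    by (rule AE_I'[of Nn]) (use Nn in \<open>auto simp: G_def null_sets_def\<close>)
  have G_ne: "G \<noteq> {}"
  proof
    assume "G = {}"
    then have "AE \<omega> in M. False" using G_AE by simp
    then show False using Mp.AE_False by simp
  qed
  have L0: "L\<^sub>k \<ge> 0"
  proof -
    obtain \<omega> where "\<omega> \<in> G" using G_ne by blast
    from G_lip[OF this, of 1 0 0] show ?thesis using abs_ge_zero[of "k \<omega> 1 0 - k \<omega> 0 0"] by simp
  qed

  have km: "(\<lambda>\<omega>. k \<omega> s t) \<in> borel_measurable M" for s t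
  proof -
    have "(\<lambda>\<omega>. (\<omega>, s, t)) \<in> measurable M (M \<Otimes>\<^sub>M (borel \<Otimes>\<^sub>M borel))"
      by (intro measurable_Pair measurable_ident_sets measurable_const) (auto simp: space_pair_measure)
    from measurable_compose[OF this k_meas] show ?thesis by simp
  qed
  have k_int: "integrable M (\<lambda>\<omega>. k \<omega> s t)" for s t
    by (rule Mp.integrable_const_bound[where B=1]) (use G_AE G_bd km in \<open>auto elim!: AE_mp\<close>)
  have K_lip: "\<bar>K s t - K s' t\<bar> \<le> L\<^sub>k * \<bar>s - s'\<bar>" for s s' t
  proof -
    have "\<bar>K s t - K s' t\<bar> = \<bar>\<integral>\<omega>. (k \<omega> s t - k \<omega> s' t) \<partial>M\<bar>"
      by (simp add: K_def mean_kernel_def Bochner_Integration.integral_diff[OF k_int k_int])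
    also have "\<dots> \<le> (\<integral>\<omega>. \<bar>k \<omega> s t - k \<omega> s' t\<bar> \<partial>M)"
      using integral_norm_bound[of M "\<lambda>\<omega>. k \<omega> s t - k \<omega> s' t"] by simp
    also have "\<dots> \<le> (\<integral>\<omega>. L\<^sub>k * \<bar>s - s'\<bar> \<partial>M)"
      by (intro integral_mono_AE integrable_abs integrable_diff k_int Mp.integrable_const)
         (use G_AE G_lip k_int in \<open>auto elim!: AE_mp\<close>)
    also have "\<dots> = L\<^sub>k * \<bar>s - s'\<bar>" by (simp add: Mp.prob_space)
    finally show ?thesis .
  qed
  have K_bd: "\<bar>K s t\<bar> \<le> 1" for s t
  proof -
    have "\<bar>K s t\<bar> \<le> (\<integral>\<omega>. \<bar>k \<omega> s t\<bar> \<partial>M)"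
      using integral_norm_bound[of M "\<lambda>\<omega>. k \<omega> s t"] by (simp add: K_def mean_kernel_def)
    also have "\<dots> \<le> (\<integral>\<omega>. 1 \<partial>M)"
      by (intro integral_mono_AE integrable_abs k_int Mp.integrable_const)
         (use G_AE G_bd in \<open>auto elim!: AE_mp\<close>)
    also have "\<dots> = 1" by (simp add: Mp.prob_space)
    finally show ?thesis .
  qed
  have K_meas: "(\<lambda>p. K (fst p) (snd p)) \<in> borel_measurable borel"
  proof -
    have "continuous_on UNIV (\<lambda>p. K (fst p) (snd p))"
      using K_cont by (simp add: K_def case_prod_unfold)
    then show ?thesis by (rule borel_measurable_continuous_onI)
  qed

  define c' where "c' = (\<lambda>z. indicator S z * c z)"
  have c'_meas: "c' \<in> borel_measurable borel"
    using borel_measurable_continuous_on_indicator[OF S_borel cS] by (simp add: c'_def)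
  have c'_bd: "\<And>z. \<bar>c' z\<bar> \<le> C" using cC C0 by (auto simp: c'_def indicator_def)

  have fst_m: "fst \<in> borel_measurable (\<rho> \<Otimes>\<^sub>M M)"
  proof -
    have "fst \<in> measurable (\<rho> \<Otimes>\<^sub>M M) \<rho>" by simp
    then show ?thesis by (simp add: measurable_cong_sets[OF refl \<rho>(2)])
  qed
  define g where "g = (\<lambda>x (q::('a \<times> real \<times> real) \<times> 'w). c' (fst q) * k (snd q) (inner (fst (fst q)) x + fst (snd (fst q))) (snd (snd (fst q))))"
  have g_meas: "g x \<in> borel_measurable (\<rho> \<Otimes>\<^sub>M M)" for x
  proof -
    have u0: "(\<lambda>z::'a \<times> real \<times> real. inner (fst z) x + fst (snd z)) \<in> borel_measurable borel"
      by (intro borel_measurable_continuous_onI continuous_intros)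
    have v0: "(\<lambda>z::'a \<times> real \<times> real. snd (snd z)) \<in> borel_measurable borel"
      by (intro borel_measurable_continuous_onI continuous_intros)
    have "(\<lambda>q::('a \<times> real \<times> real) \<times> 'w. (snd q, inner (fst (fst q)) x + fst (snd (fst q)), snd (snd (fst q))))
            \<in> measurable (\<rho> \<Otimes>\<^sub>M M) (M \<Otimes>\<^sub>M (borel \<Otimes>\<^sub>M borel))"
      by (intro measurable_Pair measurable_snd measurable_compose[OF fst_m u0] measurable_compose[OF fst_m v0])
    from measurable_compose[OF this k_meas]
    have "(\<lambda>q::('a \<times> real \<times> real) \<times> 'w. k (snd q) (inner (fst (fst q)) x + fst (snd (fst q))) (snd (snd (fst q))))
            \<in> borel_measurable (\<rho> \<Otimes>\<^sub>M M)" by simp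
    then show ?thesis unfolding g_def
      by (intro borel_measurable_times measurable_compose[OF fst_m c'_meas])
  qed
  have g_bd: "\<And>x q. q \<in> S \<times> G \<Longrightarrow> \<bar>g x q\<bar> \<le> C"
  proof -
    fix x :: 'a and q assume q: "q \<in> S \<times> G"
    have "\<bar>g x q\<bar> = \<bar>c' (fst q)\<bar> * \<bar>k (snd q) (inner (fst (fst q)) x + fst (snd (fst q))) (snd (snd (fst q)))\<bar>"
      by (simp add: g_def abs_mult)
    also have "\<dots> \<le> C * 1" using q by (intro mult_mono c'_bd G_bd C0) auto
    finally show "\<bar>g x q\<bar> \<le> C" by simp
  qed
  have g_lip: "\<And>x y q. q \<in> S \<times> G \<Longrightarrow> dist y x \<le> \<epsilon> \<Longrightarrow> \<bar>g x q - g y q\<bar> \<le> C * L\<^sub>k * \<epsilon>"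
  proof -
    fix x y :: 'a and q assume q: "q \<in> S \<times> G" and d: "dist y x \<le> \<epsilon>"
    have "norm (fst (fst q)) \<le> 1" using q by (auto simp: S_def split: prod.splits)
    with q d show "\<bar>g x q - g y q\<bar> \<le> C * L\<^sub>k * \<epsilon>" unfolding g_def
      by (intro lip_step[where kk="\<lambda>s. k (snd q) s (snd (snd (fst q)))"] c'_bd G_lip L0) auto
  qed

  have SG_sets[measurable]: "S \<times> G \<in> sets (\<rho> \<Otimes>\<^sub>M M)" using S_sets G_sets by (rule pair_measureI)
  have Q_AE: "AE q in \<rho> \<Otimes>\<^sub>M M. q \<in> S \<times> G"
  proof (rule Q.AE_pair_measure)
    show "{x \<in> space (\<rho> \<Otimes>\<^sub>M M). x \<in> S \<times> G} \<in> sets (\<rho> \<Otimes>\<^sub>M M)" by measurable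
    have "AE z in \<rho>. z \<in> S" using \<rho>_supp by (simp add: S_def)
    then show "AE z in \<rho>. AE \<omega> in M. (z, \<omega>) \<in> S \<times> G"
      by eventually_elim (use G_AE in auto)
  qed
  have g_int: "integrable (\<rho> \<Otimes>\<^sub>M M) (g x)" for x
    by (rule finite_measure.integrable_const_bound[where B=C, OF prob_space.finite_measure[OF Qp]]) (use Q_AE g_bd g_meas in \<open>auto elim!: AE_mp\<close>)

  define fK where "fK = (\<lambda>x z. c' z * K (inner (fst z) x + fst (snd z)) (snd (snd z)))"
  have fK_meas: "fK x \<in> borel_measurable \<rho>" for x
  proof -
    have w0: "(\<lambda>z::'a \<times> real \<times> real. (inner (fst z) x + fst (snd z), snd (snd z))) \<in> borel_measurable borel"
      by (intro borel_measurable_continuous_onI continuous_intros)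
    have "fK x \<in> borel_measurable borel"
      using measurable_compose[OF w0 K_meas] c'_meas unfolding fK_def
      by (intro borel_measurable_times) auto
    then show ?thesis by (simp add: measurable_cong_sets[OF \<rho>(2) refl])
  qed
  have fK_bd: "\<bar>fK x z\<bar> \<le> C" for x z
  proof -
    have "\<bar>fK x z\<bar> = \<bar>c' z\<bar> * \<bar>K (inner (fst z) x + fst (snd z)) (snd (snd z))\<bar>"
      by (simp add: fK_def abs_mult)
    also have "\<dots> \<le> C * 1" by (intro mult_mono c'_bd K_bd C0) auto
    finally show ?thesis by simp
  qed
  have fK_int: "integrable \<rho> (fK x)" for x
    by (rule R.integrable_const_bound[where B=C]) (use fK_bd fK_meas in auto)
  have f_eq: "f x = (\<integral>z. fK x z \<partial>\<rho>)" for x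
    unfolding f_def set_lebesgue_integral_def fK_def c'_def
    by (intro Bochner_Integration.integral_cong refl) (auto split: prod.splits)
  have g_exp: "(\<integral>q. g x q \<partial>(\<rho> \<Otimes>\<^sub>M M)) = f x" for x
  proof -
    have "(\<integral>q. g x q \<partial>(\<rho> \<Otimes>\<^sub>M M)) = (\<integral>z. (\<integral>\<omega>. g x (z, \<omega>) \<partial>M) \<partial>\<rho>)"
      using Q.integral_fst'[OF g_int] by simp
    also have "\<dots> = (\<integral>z. fK x z \<partial>\<rho>)"
      by (simp add: g_def fK_def K_def mean_kernel_def)
    finally show ?thesis using f_eq by simp
  qed
  have f_lip: "\<bar>f x - f y\<bar> \<le> C * L\<^sub>k * \<epsilon>" if d: "dist y x \<le> \<epsilon>" for x y
  proof -
    have pt: "\<bar>fK x z - fK y z\<bar> \<le> C * L\<^sub>k * \<epsilon>" for z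
    proof (cases "z \<in> S")
      case True
      then have "norm (fst z) \<le> 1" by (auto simp: S_def split: prod.splits)
      then show ?thesis unfolding fK_def
        by (intro lip_step[where kk="\<lambda>s. K s (snd (snd z))"] c'_bd K_lip L0 d)
    next
      case False
      then show ?thesis using C0 L0 \<epsilon> by (simp add: fK_def c'_def)
    qed
    have "\<bar>f x - f y\<bar> = \<bar>\<integral>z. (fK x z - fK y z) \<partial>\<rho>\<bar>"
      by (simp add: f_eq Bochner_Integration.integral_diff[OF fK_int fK_int])
    also have "\<dots> \<le> (\<integral>z. \<bar>fK x z - fK y z\<bar> \<partial>\<rho>)"
      using integral_norm_bound[of \<rho> "\<lambda>z. fK x z - fK y z"] by simp
    also have "\<dots> \<le> (\<integral>z. C * L\<^sub>k * \<epsilon> \<partial>\<rho>)"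
      by (intro Bochner_Integration.integral_mono integrable_abs R.integrable_const pt)
         (auto intro!: Bochner_Integration.integrable_diff fK_int)
    also have "\<dots> = C * L\<^sub>k * \<epsilon>" by (simp add: R.prob_space)
    finally show ?thesis .
  qed

  have main: "\<exists>E\<in>sets P. measure P E \<ge> 1 - \<delta> \<and> E \<subseteq> {\<xi>\<in>space P. \<forall>x\<in>X. \<bar>F \<xi> x - f x\<bar> \<le> bound}"
  proof (cases "X = {}")
    case True
    show ?thesis
      by (intro bexI[of _ "space P"]) (use \<delta> in \<open>auto simp: True P.prob_space\<close>)
  next
    case False
    define Nc where "Nc = covering_number \<epsilon> X"
    have cov_ne: "{card D | D. finite D \<and> X \<subseteq> (\<Union>y\<in>D. cball y \<epsilon>)} \<noteq> {}"
    proof -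
      have "X \<subseteq> (\<Union>x\<in>X. ball x \<epsilon>)" using \<epsilon> by auto
      then obtain D where "D \<subseteq> X" "finite D" and XD: "X \<subseteq> (\<Union>x\<in>D. ball x \<epsilon>)"
        using compactE_image[OF X, of X "\<lambda>x. ball x \<epsilon>"] by auto
      have "(\<Union>x\<in>D. ball x \<epsilon>) \<subseteq> (\<Union>x\<in>D. cball x \<epsilon>)"
        by (intro UN_mono ball_subset_cball order_refl)
      with XD have "X \<subseteq> (\<Union>x\<in>D. cball x \<epsilon>)" by (rule order_trans)
      with \<open>finite D\<close> have "card D \<in> {card D | D. finite D \<and> X \<subseteq> (\<Union>y\<in>D. cball y \<epsilon>)}" by auto
      then show ?thesis by auto
    qed
    obtain D where D: "finite D" "X \<subseteq> (\<Union>y\<in>D. cball y \<epsilon>)" "card D = Nc"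
    proof -
      have "Nc \<in> {card D | D. finite D \<and> X \<subseteq> (\<Union>y\<in>D. cball y \<epsilon>)}"
        using Inf_nat_def1[OF cov_ne] unfolding Nc_def covering_number_def .
      then show ?thesis using that by auto
    qed
    have Nc1: "Nc \<ge> 1"
    proof -
      have "D \<noteq> {}" using D(2) False by auto
      then have "card D > 0" using D(1) by (simp add: card_gt_0_iff)
      then show ?thesis using D(3) by simp
    qed
    have \<tau>_eq: "\<tau> = C * sqrt ((2 * ln (2 * real Nc) + 2 * ln (1 / \<delta>)) / real N)"
      by (simp add: \<tau>_def Nc_def)
    have l1: "ln (2 * real Nc) \<ge> 0" using Nc1 by simp
    have l2: "ln (1 / \<delta>) \<ge> 0" using \<delta> by (simp add: le_divide_eq_1)
    have A0: "0 \<le> (2 * ln (2 * real Nc) + 2 * ln (1 / \<delta>)) / real N"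
      using l1 l2 by simp
    have \<tau>0: "\<tau> \<ge> 0" using C0 A0 by (simp add: \<tau>_eq)
    have hoeff_val: "2 * exp (-2 * real N * \<tau>\<^sup>2 / (2 * C)\<^sup>2) = \<delta> / Nc" if Cpos: "C > 0"
    proof -
      define A where "A = (2 * ln (2 * real Nc) + 2 * ln (1 / \<delta>)) / real N"
      have "\<tau>\<^sup>2 = C\<^sup>2 * A" using A0 by (simp add: \<tau>_eq power_mult_distrib A_def)
      then have "-2 * real N * \<tau>\<^sup>2 / (2 * C)\<^sup>2 = - (real N * A / 2)"
        using Cpos by (simp add: power2_eq_square field_simps)
      also have "real N * A / 2 = ln (2 * real Nc) + ln (1 / \<delta>)"
        using N by (simp add: A_def field_simps)
      also have "\<dots> = ln (2 * real Nc / \<delta>)" using Nc1 \<delta> by (simp add: ln_mult ln_div)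
      finally have "exp (-2 * real N * \<tau>\<^sup>2 / (2 * C)\<^sup>2) = exp (- ln (2 * real Nc / \<delta>))" by simp
      also have "\<dots> = \<delta> / (2 * real Nc)" using Nc1 \<delta> by (simp add: exp_minus)
      finally show ?thesis using Nc1 by simp
    qed
    have comp_m: "(\<lambda>\<xi>. \<xi> i) \<in> measurable P (\<rho> \<Otimes>\<^sub>M M)" if "i < N" for i
      unfolding P_def using that by (intro measurable_component_singleton) auto
    have gi_m: "(\<lambda>\<xi>. g y (\<xi> i)) \<in> borel_measurable P" if "i < N" for i y
      using measurable_compose[OF comp_m[OF that] g_meas] .
    have sum_m: "(\<lambda>\<xi>. \<bar>(\<Sum>i<N. g y (\<xi> i)) / real N - f y\<bar>) \<in> borel_measurable P" for y
    proof -
      have "(\<lambda>\<xi>. \<Sum>i<N. g y (\<xi> i)) \<in> borel_measurable P"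
        using gi_m by (intro borel_measurable_sum) auto
      then show ?thesis by measurable
    qed
    define H where "H = (\<lambda>y. {\<xi>\<in>space P. \<tau> \<le> \<bar>(\<Sum>i<N. g y (\<xi> i)) / real N - f y\<bar>})"
    have H_sets: "H y \<in> sets P" for y
      unfolding H_def using sum_m[of y] by measurable
    define E0 where "E0 = {\<xi>\<in>space P. \<forall>i\<in>{..<N}. \<xi> i \<in> S \<times> G}"
    have E0_sets: "E0 \<in> sets P"
      unfolding E0_def
    proof (rule sets.sets_Collect_finite_All)
      fix i assume "i \<in> {..<N}"
      then have "(\<lambda>\<xi>. \<xi> i) -` (S \<times> G) \<inter> space P \<in> sets P"
        using comp_m SG_sets by (intro measurable_sets) auto
      moreover have "{\<xi>\<in>space P. \<xi> i \<in> S \<times> G} = (\<lambda>\<xi>. \<xi> i) -` (S \<times> G) \<inter> space P" by auto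
      ultimately show "{\<xi>\<in>space P. \<xi> i \<in> S \<times> G} \<in> sets P" by simp
    qed simp
    have E0_AE: "AE \<xi> in P. \<xi> \<in> E0"
    proof -
      have "AE \<xi> in P. \<forall>i\<in>{..<N}. \<xi> i \<in> S \<times> G"
      proof (rule AE_finite_allI)
        fix i assume "i \<in> {..<N}"
        then show "AE \<xi> in P. \<xi> i \<in> S \<times> G"
          unfolding P_def using AE_PiM_component[of "{..<N}" "\<lambda>_. \<rho> \<Otimes>\<^sub>M M" i "\<lambda>q. q \<in> S \<times> G"] Qp Q_AE by auto
      qed simp
      then show ?thesis using AE_space by eventually_elim (auto simp: E0_def)
    qed
    have E0_prob: "P.prob E0 = 1" using E0_AE E0_sets by (simp add: P.AE_in_set_eq_1)
    have compl0: "P.prob (space P - E0) = 0" using P.prob_compl[OF E0_sets] E0_prob by simp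
    define U where "U = (if C > 0 then (\<Union>y\<in>D. H y) else {})"
    have U_sets: "U \<in> sets P" unfolding U_def using H_sets D(1) by auto
    have gAE: "AE q in \<rho> \<Otimes>\<^sub>M M. \<bar>g y q\<bar> \<le> C" for y
      using Q_AE by eventually_elim (rule g_bd)
    have U_prob: "P.prob U \<le> \<delta>"
    proof (cases "C > 0")
      case True
      have "P.prob U \<le> (\<Sum>y\<in>D. P.prob (H y))" unfolding U_def using True D(1) H_sets
        by (simp add: P.finite_measure_subadditive_finite image_subset_iff)
      also have "\<dots> \<le> (\<Sum>y\<in>D. \<delta> / Nc)"
      proof (rule sum_mono)
        fix y assume "y \<in> D"
        have "P.prob (H y) \<le> 2 * exp (-2 * real N * \<tau>\<^sup>2 / (2 * C)\<^sup>2)"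
          using hoeffding_iid[OF Qp g_meas[of y] gAE[of y] True N \<tau>0] g_exp[of y]
          unfolding H_def P_def by simp
        then show "P.prob (H y) \<le> \<delta> / Nc" using hoeff_val[OF True] by simp
      qed
      also have "\<dots> = \<delta>" using D(3) Nc1 by simp
      finally show ?thesis .
    next
      case False then show ?thesis using \<delta> by (simp add: U_def)
    qed
    define E where "E = E0 - U"
    have E_sets: "E \<in> sets P" unfolding E_def using E0_sets U_sets by auto
    have E_prob: "P.prob E \<ge> 1 - \<delta>"
    proof -
      have "space P - E \<subseteq> (space P - E0) \<union> U" unfolding E_def by auto
      then have "P.prob (space P - E) \<le> P.prob ((space P - E0) \<union> U)"
        using E0_sets U_sets by (intro P.finite_measure_mono) auto
      also have "\<dots> \<le> P.prob (space P - E0) + P.prob U"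
        using E0_sets U_sets by (intro measure_Un_le) auto
      finally have "P.prob (space P - E) \<le> \<delta>" using compl0 U_prob by simp
      then show ?thesis using P.prob_compl[OF E_sets] by simp
    qed
    have Fg: "F \<xi> x = (\<Sum>i<N. g x (\<xi> i)) / real N" if "\<xi> \<in> E0" for \<xi> x
    proof -
      have "(\<Sum>i<N. (case \<xi> i of ((a, b, t), \<omega>) \<Rightarrow> c (a, b, t) * k \<omega> (inner a x + b) t)) = (\<Sum>i<N. g x (\<xi> i))"
      proof (rule sum.cong[OF refl])
        fix i assume "i \<in> {..<N}"
        then have "\<xi> i \<in> S \<times> G" using that by (auto simp: E0_def)
        then show "(case \<xi> i of ((a, b, t), \<omega>) \<Rightarrow> c (a, b, t) * k \<omega> (inner a x + b) t) = g x (\<xi> i)"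
          by (auto simp: g_def c'_def split: prod.splits)
      qed
      then show ?thesis by (simp add: F_def)
    qed
    have E_good: "E \<subseteq> {\<xi>\<in>space P. \<forall>x\<in>X. \<bar>F \<xi> x - f x\<bar> \<le> bound}"
    proof (rule subsetI)
      fix \<xi> assume "\<xi> \<in> E"
      then have \<xi>E0: "\<xi> \<in> E0" and \<xi>U: "\<xi> \<notin> U" by (auto simp: E_def)
      then have \<xi>sp: "\<xi> \<in> space P" and \<xi>i: "\<And>i. i < N \<Longrightarrow> \<xi> i \<in> S \<times> G" by (auto simp: E0_def)
      have "\<forall>x\<in>X. \<bar>F \<xi> x - f x\<bar> \<le> bound"
      proof
        fix x assume "x \<in> X"
        then obtain y where y: "y \<in> D" "dist y x \<le> \<epsilon>" using D(2) by (auto simp: mem_cball)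
        have t1: "\<bar>F \<xi> x - F \<xi> y\<bar> \<le> C * L\<^sub>k * \<epsilon>"
        proof -
          have "\<bar>F \<xi> x - F \<xi> y\<bar> = \<bar>\<Sum>i<N. (g x (\<xi> i) - g y (\<xi> i))\<bar> / real N"
            by (simp add: Fg[OF \<xi>E0] sum_subtractf diff_divide_distrib[symmetric])
          also have "\<dots> \<le> (\<Sum>i<N. \<bar>g x (\<xi> i) - g y (\<xi> i)\<bar>) / real N"
            by (intro divide_right_mono sum_abs) simp
          also have "\<dots> \<le> (\<Sum>i<N. C * L\<^sub>k * \<epsilon>) / real N"
            by (intro divide_right_mono sum_mono g_lip \<xi>i y(2)) auto
          also have "\<dots> = C * L\<^sub>k * \<epsilon>" using N by simp
          finally show ?thesis .
        qed
        have t2: "\<bar>F \<xi> y - f y\<bar> \<le> \<tau>"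
        proof (cases "C > 0")
          case True
          then have "\<xi> \<notin> H y" using \<xi>U y(1) by (auto simp: U_def)
          then show ?thesis using \<xi>sp by (simp add: H_def Fg[OF \<xi>E0])
        next
          case False
          then have C00: "C = 0" using C0 by simp
          have c'0: "c' z = 0" for z using c'_bd[of z] C00 by simp
          have g0: "g y q = 0" for q by (simp add: g_def c'0)
          have "f y = 0" using g_exp[of y] by (simp add: g0)
          then show ?thesis using \<tau>0 by (simp add: Fg[OF \<xi>E0] g0)
        qed
        have t3: "\<bar>f y - f x\<bar> \<le> C * L\<^sub>k * \<epsilon>" using f_lip[OF y(2)] by (simp add: abs_minus_commute)
        show "\<bar>F \<xi> x - f x\<bar> \<le> bound" using t1 t2 t3 unfolding bound_def abs_le_iff by linarith
      qed
      then show "\<xi> \<in> {\<xi>\<in>space P. \<forall>x\<in>X. \<bar>F \<xi> x - f x\<bar> \<le> bound}" using \<xi>sp by simp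
    qed
    show ?thesis using E_sets E_prob E_good by blast
  qed
  show ?thesis using main unfolding Let_def S_def K_def C_def f_def F_def P_def bound_def \<tau>_def .
qed

end
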